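(* For every $k\in\mathcal K$, the map $S\to\mathbb Z$, $s\mapsto d_k^{ur,\dagger}(s)$, is odd dominant.
   Context: Fix a prime $p\ge7$ and $k_0\in\{2,\dots,p\}$. $\{n\}$ is the residue of $n$ mod $p-1$ in $\{0,\dots,p-2\}$. $\mathcal K=\{k\ge2:k\equiv k_0\pmod{p-1}\}$, $k_\bullet=(k-k_0)/(p-1)$. For $s\in\{0,\dots,p-2\}$: $a_s=\{k_0-2-2s\}$, $\delta_s=\lfloor\frac{s+\{a_s+s\}}{p-1}\rfloor$; if $a_s+s<p-1$, $t_1^{(s)}=s+\delta_s$, $t_2^{(s)}=a_s+s+\delta_s+2$; otherwise $t_1^{(s)}=\{a_s+s\}+\delta_s+1$, $t_2^{(s)}=s+\delta_s+1$. For $k\in\mathcal K$: $d_k^{ur,\dagger}(s)=\lfloor\frac{k_\bullet-t_1^{(s)}}{p+1}\rfloor+\lfloor\frac{k_\bullet-t_2^{(s)}}{p+1}\rfloor+2+\delta_s$. $S=\{\lceil\frac{k_0+1}{2}\rceil,\dots,\lfloor\frac{k_0+p-4}{2}\rfloor\}$. For $\phi:S\to\mathbb Z$, a pair $s<s'$ in $S$ is $\phi$-regular if $|\phi(s)-\phi(s')|\le1$ and, whenever $\phi(s)\neq\phi(s')$, $\phi(s')$ is odd; $\phi$ is odd dominant if every pair $s<s'$ in $S$ is $\phi$-regular. *)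

theory Defs
  imports Complex_Main "HOL-Computational_Algebra.Primes"
begin

definition res :: "int \<Rightarrow> int \<Rightarrow> int" where
  "res p n = n mod (p - 1)"

definition a_s :: "int \<Rightarrow> int \<Rightarrow> int \<Rightarrow> int" where
  "a_s p k0 s = res p (k0 - 2 - 2 * s)"

definition delta_s :: "int \<Rightarrow> int \<Rightarrow> int \<Rightarrow> int" where
  "delta_s p k0 s = \<lfloor>real_of_int (s + res p (a_s p k0 s + s)) / real_of_int (p - 1)\<rfloor>"

definition t1 :: "int \<Rightarrow> int \<Rightarrow> int \<Rightarrow> int" where
  "t1 p k0 s = (if a_s p k0 s + s < p - 1 then s + delta_s p k0 s
                else res p (a_s p k0 s + s) + delta_s p k0 s + 1)"

definition t2 :: "int \<Rightarrow> int \<Rightarrow> int \<Rightarrow> int" where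
  "t2 p k0 s = (if a_s p k0 s + s < p - 1 then a_s p k0 s + s + delta_s p k0 s + 2
                else s + delta_s p k0 s + 1)"

definition kbul :: "int \<Rightarrow> int \<Rightarrow> int \<Rightarrow> int" where
  "kbul p k0 k = (k - k0) div (p - 1)"

definition d_ur :: "int \<Rightarrow> int \<Rightarrow> int \<Rightarrow> int \<Rightarrow> int" where
  "d_ur p k0 k s =
     \<lfloor>real_of_int (kbul p k0 k - t1 p k0 s) / real_of_int (p + 1)\<rfloor>
   + \<lfloor>real_of_int (kbul p k0 k - t2 p k0 s) / real_of_int (p + 1)\<rfloor>
   + 2 + delta_s p k0 s"

definition Kset :: "int \<Rightarrow> int \<Rightarrow> int set" where
  "Kset p k0 = {k. k \<ge> 2 \<and> k mod (p - 1) = k0 mod (p - 1)}"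

definition Sset :: "int \<Rightarrow> int \<Rightarrow> int set" where
  "Sset p k0 = {\<lceil>real_of_int (k0 + 1) / 2\<rceil> .. \<lfloor>real_of_int (k0 + p - 4) / 2\<rfloor>}"

definition phi_regular :: "(int \<Rightarrow> int) \<Rightarrow> int \<Rightarrow> int \<Rightarrow> bool" where
  "phi_regular \<phi> s s' \<longleftrightarrow> \<bar>\<phi> s - \<phi> s'\<bar> \<le> 1 \<and> (\<phi> s \<noteq> \<phi> s' \<longrightarrow> odd (\<phi> s'))"

definition odd_dominant :: "int set \<Rightarrow> (int \<Rightarrow> int) \<Rightarrow> bool" where
  "odd_dominant S \<phi> \<longleftrightarrow> (\<forall>s\<in>S. \<forall>s'\<in>S. s < s' \<longrightarrow> phi_regular \<phi> s s')"

end

theory Submission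
  imports Defs
begin

lemma fdiv: "\<lfloor>real_of_int a / real_of_int b\<rfloor> = a div b"
  by (rule floor_divide_of_int_eq)

lemma S_bounds:
  assumes "s \<in> Sset p k0"
  shows "k0 + 1 \<le> 2 * s" "2 * s \<le> k0 + p - 4"
proof -
  from assms have h1: "\<lceil>real_of_int (k0 + 1) / 2\<rceil> \<le> s"
    and h2: "s \<le> \<lfloor>real_of_int (k0 + p - 4) / 2\<rfloor>" by (auto simp: Sset_def)
  from h1 have "real_of_int (k0 + 1) / 2 \<le> real_of_int s" by (simp add: ceiling_le_iff)
  hence "real_of_int (k0 + 1) \<le> real_of_int (2 * s)" by simp
  thus "k0 + 1 \<le> 2 * s" by linarith
  from h2 have "real_of_int s \<le> real_of_int (k0 + p - 4) / 2" by (simp add: le_floor_iff)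
  hence "real_of_int (2*s) \<le> real_of_int (k0 + p - 4)" by simp
  thus "2 * s \<le> k0 + p - 4" by linarith
qed

lemma d_formula:
  fixes p k0 k s :: int
  assumes "p \<ge> 7" "2 \<le> k0" "k0 \<le> p" "s \<in> Sset p k0"
  shows "d_ur p k0 k s = (kbul p k0 k - (s+1)) div (p+1) + (kbul p k0 k - (k0-1-s)) div (p+1) + 2"
proof -
  note b = S_bounds[OF assms(4)]
  have e0: "k0-2-2*s = (k0+p-3-2*s) + (-1)*(p-1)" by (simp add: algebra_simps)
  have "(k0-2-2*s) mod (p-1) = (k0+p-3-2*s) mod (p-1)" unfolding e0 by (rule mod_mult_self1)
  also have "\<dots> = k0+p-3-2*s" using b assms by (intro mod_pos_pos_trivial) auto
  finally have a: "a_s p k0 s = k0+p-3-2*s" by (simp add: a_s_def res_def)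
  show ?thesis
  proof (cases "k0 - 1 \<le> s")
    case True
    have r: "res p (a_s p k0 s + s) = k0+p-3-s" unfolding res_def a
      by (subst mod_pos_pos_trivial) (use b assms True in auto)
    have e1: "k0+p-3 = (k0-2) + 1*(p-1)" by simp
    have "(k0+p-3) div (p-1) = 1 + (k0-2) div (p-1)" unfolding e1 using assms by (intro div_mult_self1) simp
    also have "(k0-2) div (p-1) = 0" using assms by (intro div_pos_pos_trivial) auto
    finally have dd: "(k0+p-3) div (p-1) = 1" by simp
    have e2: "s + (k0+p-3-s) = k0+p-3" by simp
    have de: "delta_s p k0 s = 1" unfolding delta_s_def r fdiv e2 dd ..
    have e3: "kbul p k0 k - (k0+p-s) = (kbul p k0 k - (k0-1-s)) + (-1)*(p+1)" by simp
    have "(kbul p k0 k - (k0+p-s)) div (p+1) = -1 + (kbul p k0 k - (k0-1-s)) div (p+1)"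
      unfolding e3 using assms by (intro div_mult_self1) simp
    also have "\<dots> = (kbul p k0 k - (k0-1-s)) div (p+1) - 1" by simp
    finally have e: "(kbul p k0 k - (k0+p-s)) div (p+1) = (kbul p k0 k - (k0-1-s)) div (p+1) - 1" .
    have "a_s p k0 s + s < p - 1" using a True by simp
    hence "t1 p k0 s = s+1" "t2 p k0 s = k0+p-s" unfolding t1_def t2_def de a by auto
    thus ?thesis unfolding d_ur_def fdiv de using e by simp
  next
    case False
    have "res p (a_s p k0 s + s) = ((k0-2-s) + (p-1)) mod (p-1)" unfolding res_def a
      by (simp add: algebra_simps)
    also have "\<dots> = k0-2-s" unfolding mod_add_self2
      using b assms False by (intro mod_pos_pos_trivial) auto
    finally have r: "res p (a_s p k0 s + s) = k0-2-s" .
    have de: "delta_s p k0 s = 0" unfolding delta_s_def r fdiv using assms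
      by (simp add: div_pos_pos_trivial)
    have "\<not> a_s p k0 s + s < p - 1" using a False by simp
    hence "t1 p k0 s = k0-1-s" "t2 p k0 s = s+1" unfolding t1_def t2_def de r by auto
    thus ?thesis unfolding d_ur_def fdiv de by simp
  qed
qed

lemma div_step:
  fixes K a b q :: int
  assumes "q > 0" "a \<le> b" "b - a \<le> q"
  shows "(K - b) div q \<le> (K - a) div q" "(K - a) div q \<le> (K - b) div q + 1"
proof -
  show "(K - b) div q \<le> (K - a) div q" using assms by (intro zdiv_mono1) auto
  have "(K - a) div q \<le> ((K - b) + 1*q) div q" using assms by (intro zdiv_mono1) auto
  also have "\<dots> = (K - b) div q + 1" using assms by simp
  finally show "(K - a) div q \<le> (K - b) div q + 1" .
qed

theorem mainTheorem8:
  fixes p k0 k :: int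
  assumes "prime p" and "p \<ge> 7"
    and "2 \<le> k0" and "k0 \<le> p"
    and "k \<in> Kset p k0"
  shows "odd_dominant (Sset p k0) (\<lambda>s. d_ur p k0 k s)"
  unfolding odd_dominant_def phi_regular_def
proof (intro ballI impI)
  fix s s' assume s: "s \<in> Sset p k0" and s': "s' \<in> Sset p k0" and lt: "s < s'"
  define K where "K = kbul p k0 k"
  define q where "q = p + 1"
  have q: "q > 0" using assms q_def by simp
  note bs = S_bounds[OF s] and bs' = S_bounds[OF s']
  define A where "A = (K - (k0-1-s')) div q"
  define B where "B = (K - (k0-1-s)) div q"
  define C where "C = (K - (s+1)) div q"
  define D where "D = (K - (s'+1)) div q"
  have ds: "d_ur p k0 k s = C + B + 2" using d_formula[OF assms(2,3,4) s] by (simp add: K_def q_def B_def C_def)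
  have ds': "d_ur p k0 k s' = D + A + 2" using d_formula[OF assms(2,3,4) s'] by (simp add: K_def q_def A_def D_def)
  have "B \<le> A" unfolding A_def B_def using div_step(1)[OF q, of "k0-1-s'" "k0-1-s" K] bs bs' lt q_def by auto
  moreover have "C \<le> B" unfolding C_def B_def using div_step(1)[OF q, of "k0-1-s" "s+1" K] bs bs' lt q_def by auto
  moreover have "D \<le> C" unfolding C_def D_def using div_step(1)[OF q, of "s+1" "s'+1" K] bs bs' lt q_def by auto
  moreover have "A \<le> D + 1" unfolding A_def D_def using div_step(2)[OF q, of "k0-1-s'" "s'+1" K] bs bs' lt q_def by auto
  ultimately show "\<bar>d_ur p k0 k s - d_ur p k0 k s'\<bar> \<le> 1 \<and>
       (d_ur p k0 k s \<noteq> d_ur p k0 k s' \<longrightarrow> odd (d_ur p k0 k s'))"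
    unfolding ds ds'
    by (cases "A = D") (auto, presburger+)
qed

end
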